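(* Let $\mathbb{K}$ be an arbitrary field and let $A$ be a two-dimensional simple evolution $\mathbb{K}$-algebra. Then $A$ is isomorphic to an algebra of exactly one of the following three types (all parameters are nonzero scalars of $\mathbb{K}$): \begin{itemize} \item type $\mathbf{II}^{0,2}_{\lambda}$: the evolution algebra with natural basis $\{e_1,e_2\}$ and structure matrix $\begin{pmatrix}0&\lambda\\ 1&0\end{pmatrix}$ (i.e. $e_1^2=e_2$, $e_2^2=\lambda e_1$), $\lambda\in\mathbb{K}^\times$; \item type $\mathbf{II}^{1,3}_{\lambda}$: structure matrix $\begin{pmatrix}1&\lambda\\ 1&0\end{pmatrix}$ (i.e. $e_1^2=e_1+e_2$, $e_2^2=\lambda e_1$), $\lambda\in\mathbb{K}^\times$; \item type $\mathbf{II}^{2,4}_{\lambda,\mu}$: structure matrix $\begin{pmatrix}1&\lambda\\ \mu&1\end{pmatrix}$ (i.e. $e_1^2=e_1+\mu e_2$, $e_2^2=\lambda e_1+e_2$), $\lambda,\mu\in\mathbb{K}^\times$ with $\lambda\mu\neq 1$. \end{itemize}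
   Context: An evolution algebra over a field $\mathbb{K}$ is a $\mathbb{K}$-algebra $A$ with a basis $\{e_1,\dots,e_n\}$ (a natural basis) such that $e_ie_j=0$ for all $i\neq j$. The structure matrix $(\omega_{ij})$ relative to this basis is defined by $e_i^2=\sum_{j}\omega_{ji}e_j$. A $\mathbb{K}$-algebra $A$ is simple if $A^2\neq 0$ and its only ideals are $0$ and $A$. *)

theory Defs
  imports Complex_Main "HOL-Library.Product_Plus"
begin

definition is_algebra :: "('k::field \<Rightarrow> 'v::ab_group_add \<Rightarrow> 'v) \<Rightarrow> ('v \<Rightarrow> 'v \<Rightarrow> 'v) \<Rightarrow> bool" where
  "is_algebra scale mult \<longleftrightarrow> vector_space scale \<and>
     (\<forall>x. Vector_Spaces.linear scale scale (mult x)) \<and>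
     (\<forall>y. Vector_Spaces.linear scale scale (\<lambda>x. mult x y))"

definition is_evolution_algebra :: "('k::field \<Rightarrow> 'v::ab_group_add \<Rightarrow> 'v) \<Rightarrow> ('v \<Rightarrow> 'v \<Rightarrow> 'v) \<Rightarrow> bool" where
  "is_evolution_algebra scale mult \<longleftrightarrow> is_algebra scale mult \<and>
     (\<exists>B. \<not> module.dependent scale B \<and> module.span scale B = UNIV \<and>
          (\<forall>x\<in>B. \<forall>y\<in>B. x \<noteq> y \<longrightarrow> mult x y = 0))"

definition alg_ideal :: "('k::field \<Rightarrow> 'v::ab_group_add \<Rightarrow> 'v) \<Rightarrow> ('v \<Rightarrow> 'v \<Rightarrow> 'v) \<Rightarrow> 'v set \<Rightarrow> bool" where
  "alg_ideal scale mult I \<longleftrightarrow> module.subspace scale I \<and>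
     (\<forall>a x. x \<in> I \<longrightarrow> mult a x \<in> I \<and> mult x a \<in> I)"

definition is_simple_algebra :: "('k::field \<Rightarrow> 'v::ab_group_add \<Rightarrow> 'v) \<Rightarrow> ('v \<Rightarrow> 'v \<Rightarrow> 'v) \<Rightarrow> bool" where
  "is_simple_algebra scale mult \<longleftrightarrow> (\<exists>x y. mult x y \<noteq> 0) \<and>
     (\<forall>I. alg_ideal scale mult I \<longrightarrow> I = {0} \<or> I = UNIV)"

text \<open>The model space K^2 with natural basis e1 = (1,0), e2 = (0,1).\<close>
definition scale2 :: "'k::field \<Rightarrow> 'k \<times> 'k \<Rightarrow> 'k \<times> 'k" where
  "scale2 c p = (c * fst p, c * snd p)"

text \<open>Two-dimensional evolution algebra with structure matrix (w11 w12; w21 w22),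
  i.e. e1^2 = w11 e1 + w21 e2, e2^2 = w12 e1 + w22 e2, e1 e2 = e2 e1 = 0.\<close>
definition evo_mult2 :: "'k::field \<Rightarrow> 'k \<Rightarrow> 'k \<Rightarrow> 'k \<Rightarrow> 'k \<times> 'k \<Rightarrow> 'k \<times> 'k \<Rightarrow> 'k \<times> 'k" where
  "evo_mult2 w11 w12 w21 w22 p q =
     (fst p * fst q * w11 + snd p * snd q * w12, fst p * fst q * w21 + snd p * snd q * w22)"

definition iso_to_model :: "('k::field \<Rightarrow> 'v::ab_group_add \<Rightarrow> 'v) \<Rightarrow> ('v \<Rightarrow> 'v \<Rightarrow> 'v)
    \<Rightarrow> ('k \<times> 'k \<Rightarrow> 'k \<times> 'k \<Rightarrow> 'k \<times> 'k) \<Rightarrow> bool" where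
  "iso_to_model scale mult m \<longleftrightarrow> (\<exists>f. bij f \<and> Vector_Spaces.linear scale scale2 f \<and>
     (\<forall>x y. f (mult x y) = m (f x) (f y)))"

definition type_II_0_2 :: "('k::field \<Rightarrow> 'v::ab_group_add \<Rightarrow> 'v) \<Rightarrow> ('v \<Rightarrow> 'v \<Rightarrow> 'v) \<Rightarrow> bool" where
  "type_II_0_2 scale mult \<longleftrightarrow> (\<exists>lam::'k. lam \<noteq> 0 \<and> iso_to_model scale mult (evo_mult2 0 lam 1 0))"

definition type_II_1_3 :: "('k::field \<Rightarrow> 'v::ab_group_add \<Rightarrow> 'v) \<Rightarrow> ('v \<Rightarrow> 'v \<Rightarrow> 'v) \<Rightarrow> bool" where
  "type_II_1_3 scale mult \<longleftrightarrow> (\<exists>lam::'k. lam \<noteq> 0 \<and> iso_to_model scale mult (evo_mult2 1 lam 1 0))"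

definition type_II_2_4 :: "('k::field \<Rightarrow> 'v::ab_group_add \<Rightarrow> 'v) \<Rightarrow> ('v \<Rightarrow> 'v \<Rightarrow> 'v) \<Rightarrow> bool" where
  "type_II_2_4 scale mult \<longleftrightarrow> (\<exists>lam mu::'k. lam \<noteq> 0 \<and> mu \<noteq> 0 \<and> lam * mu \<noteq> 1 \<and>
      iso_to_model scale mult (evo_mult2 1 lam mu 1))"

end

theory Submission
  imports Defs
begin

definition nat_basis :: "('k::field \<Rightarrow> 'v::ab_group_add \<Rightarrow> 'v) \<Rightarrow> ('v \<Rightarrow> 'v \<Rightarrow> 'v) \<Rightarrow> 'v \<Rightarrow> 'v
   \<Rightarrow> 'k \<Rightarrow> 'k \<Rightarrow> 'k \<Rightarrow> 'k \<Rightarrow> bool" where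
  "nat_basis scale mult u w a b c d \<longleftrightarrow>
    (\<forall>p q. scale p u + scale q w = 0 \<longrightarrow> p = 0 \<and> q = 0) \<and>
    (\<forall>v. \<exists>p q. v = scale p u + scale q w) \<and>
    mult u w = 0 \<and> mult w u = 0 \<and>
    mult u u = scale a u + scale c w \<and> mult w w = scale b u + scale d w"

definition bilin :: "('k::field \<Rightarrow> 'v::ab_group_add \<Rightarrow> 'v) \<Rightarrow> ('v \<Rightarrow> 'v \<Rightarrow> 'v) \<Rightarrow> bool" where
  "bilin scale mult \<longleftrightarrow> (\<forall>x y z. mult x (y + z) = mult x y + mult x z) \<and>
     (\<forall>x y z. mult (y + z) x = mult y x + mult z x) \<and>
     (\<forall>c x y. mult x (scale c y) = scale c (mult x y)) \<and>
     (\<forall>c x y. mult (scale c y) x = scale c (mult y x))"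

lemma algebra_bilin:
  assumes "is_algebra scale mult"
  shows "vector_space scale" "bilin scale mult"
  using assms unfolding is_algebra_def bilin_def Vector_Spaces.linear_iff by auto

lemma vs_scale2: "vector_space (scale2 :: 'k::field \<Rightarrow> _)"
  unfolding vector_space_def scale2_def by (auto simp: algebra_simps)

lemma nat_basis_swap:
  "nat_basis scale mult u w a b c d \<Longrightarrow> nat_basis scale mult w u d c b a"
  unfolding nat_basis_def by (metis add.commute)

lemma nat_basis_rescale:
  assumes VS: "vector_space scale" and BL: "bilin scale mult"
    and nb: "nat_basis scale mult u w a b c d" and al: "\<alpha> \<noteq> 0" and be: "\<beta> \<noteq> 0"
  shows "nat_basis scale mult (scale \<alpha> u) (scale \<beta> w) (\<alpha>*a) (\<beta>*\<beta>*b/\<alpha>) (\<alpha>*\<alpha>*c/\<beta>) (\<beta>*d)"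
proof -
  interpret vs: vector_space scale by (rule VS)
  have b1: "mult x (y + z) = mult x y + mult x z" "mult (y + z) x = mult y x + mult z x"
     "mult x (scale k y) = scale k (mult x y)" "mult (scale k y) x = scale k (mult y x)" for x y z k
    using BL unfolding bilin_def by auto
  from nb have i: "\<And>p q. scale p u + scale q w = 0 \<Longrightarrow> p = 0 \<and> q = 0"
    and s: "\<And>v. \<exists>p q. v = scale p u + scale q w"
    and m: "mult u w = 0" "mult w u = 0" "mult u u = scale a u + scale c w" "mult w w = scale b u + scale d w"
    unfolding nat_basis_def by auto
  show ?thesis unfolding nat_basis_def
  proof (intro conjI allI impI)
    fix p q assume "scale p (scale \<alpha> u) + scale q (scale \<beta> w) = 0"
    then have "p * \<alpha> = 0 \<and> q * \<beta> = 0" using i[of "p*\<alpha>" "q*\<beta>"] by simp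
    then show "p = 0" "q = 0" using al be by auto
  next
    fix v
    obtain p q where "v = scale p u + scale q w" using s by blast
    then show "\<exists>p q. v = scale p (scale \<alpha> u) + scale q (scale \<beta> w)"
      using al be by (intro exI[of _ "p/\<alpha>"] exI[of _ "q/\<beta>"]) simp
  next
    show "mult (scale \<alpha> u) (scale \<beta> w) = 0" "mult (scale \<beta> w) (scale \<alpha> u) = 0"
      using m by (simp_all add: b1)
  next
    show "mult (scale \<alpha> u) (scale \<alpha> u) = scale (\<alpha> * a) (scale \<alpha> u) + scale (\<alpha> * \<alpha> * c / \<beta>) (scale \<beta> w)"
      using m al be by (simp add: b1 vs.scale_right_distrib algebra_simps)
    show "mult (scale \<beta> w) (scale \<beta> w) = scale (\<beta> * \<beta> * b / \<alpha>) (scale \<alpha> u) + scale (\<beta> * d) (scale \<beta> w)"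
      using m al be by (simp add: b1 vs.scale_right_distrib algebra_simps)
  qed
qed

lemma nat_basis_mult:
  assumes VS: "vector_space scale" and BL: "bilin scale mult"
    and nb: "nat_basis scale mult u w a b c d"
    and g_def: "g = (\<lambda>x::'k::field\<times>'k. scale (fst x) u + scale (snd x) w)"
  shows "bij g" "\<And>x y. g (x + y) = g x + g y" "\<And>k x. g (scale2 k x) = scale k (g x)"
    "\<And>x y. g (evo_mult2 a b c d x y) = mult (g x) (g y)"
proof -
  interpret vs: vector_space scale by (rule VS)
  have b1: "mult x (y + z) = mult x y + mult x z" "mult (y + z) x = mult y x + mult z x"
     "mult x (scale k y) = scale k (mult x y)" "mult (scale k y) x = scale k (mult y x)" for x y z k
    using BL unfolding bilin_def by auto
  from nb have i: "\<And>p q. scale p u + scale q w = 0 \<Longrightarrow> p = 0 \<and> q = 0"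
    and s: "\<And>v. \<exists>p q. v = scale p u + scale q w"
    and m: "mult u w = 0" "mult w u = 0" "mult u u = scale a u + scale c w" "mult w w = scale b u + scale d w"
    unfolding nat_basis_def by auto
  show "bij g"
  proof (rule bijI)
    show "inj g"
    proof (rule injI)
      fix x y assume "g x = g y"
      then have "scale (fst x - fst y) u + scale (snd x - snd y) w = 0"
        unfolding g_def by (simp add: vs.scale_left_diff_distrib algebra_simps)
      then have "fst x - fst y = 0 \<and> snd x - snd y = 0" by (rule i)
      then show "x = y" by (simp add: prod_eq_iff)
    qed
    show "surj g"
    proof (rule surjI[of _ "\<lambda>v. SOME x. g x = v"])
      fix v
      obtain p q where "v = scale p u + scale q w" using s by blast
      then have "g (p, q) = v" unfolding g_def by simp
      then show "g (SOME x. g x = v) = v" by (rule someI)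
    qed
  qed
  show "g (x + y) = g x + g y" for x y
    unfolding g_def by (simp add: vs.scale_left_distrib algebra_simps)
  show "g (scale2 k x) = scale k (g x)" for k x
    unfolding g_def scale2_def by (simp add: vs.scale_right_distrib)
  show "g (evo_mult2 a b c d x y) = mult (g x) (g y)" for x y
    unfolding g_def evo_mult2_def using m
    by (simp add: b1 vs.scale_right_distrib vs.scale_left_distrib algebra_simps)
qed

lemma model_iso:
  assumes VS: "vector_space scale" and BL: "bilin scale mult"
    and nb: "nat_basis scale mult u w a b c d"
  shows "iso_to_model scale mult (evo_mult2 a b c d)"
proof -
  define g where "g = (\<lambda>x::'a\<times>'a. scale (fst x) u + scale (snd x) w)"
  note G = nat_basis_mult[OF VS BL nb g_def]
  define f where "f = inv g"
  have fg: "f (g x) = x" for x unfolding f_def using G(1) by (simp add: bij_is_inj)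
  have gf: "g (f y) = y" for y unfolding f_def using G(1) by (simp add: bij_is_surj surj_f_inv_f)
  show ?thesis unfolding iso_to_model_def
  proof (intro exI conjI allI)
    show "bij f" unfolding f_def using G(1) by (rule bij_imp_bij_inv)
    show "Vector_Spaces.linear scale scale2 f"
      unfolding Vector_Spaces.linear_iff
    proof (intro conjI allI VS vs_scale2)
      fix x y
      have "x + y = g (f x + f y)" by (simp only: G(2) gf)
      then show "f (x + y) = f x + f y" using fg by simp
    next
      fix k x
      have "scale k x = g (scale2 k (f x))" by (simp only: G(3) gf)
      then show "f (scale k x) = scale2 k (f x)" using fg by simp
    qed
    fix x y
    have "mult x y = g (evo_mult2 a b c d (f x) (f y))" by (simp only: G(4) gf)
    then show "f (mult x y) = evo_mult2 a b c d (f x) (f y)" using fg by simp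
  qed
qed

definition mideal :: "('k::field \<times> 'k \<Rightarrow> 'k \<times> 'k \<Rightarrow> 'k \<times> 'k) \<Rightarrow> ('k \<times> 'k) set \<Rightarrow> bool" where
  "mideal m J \<longleftrightarrow> 0 \<in> J \<and> (\<forall>x\<in>J. \<forall>y\<in>J. x + y \<in> J) \<and> (\<forall>k x. x \<in> J \<longrightarrow> scale2 k x \<in> J) \<and>
     (\<forall>z x. x \<in> J \<longrightarrow> m z x \<in> J \<and> m x z \<in> J)"

lemma simple_transfer:
  fixes g :: "'k::field \<times> 'k \<Rightarrow> 'v::ab_group_add"
  assumes VS: "vector_space scale" and S: "is_simple_algebra scale mult" and g: "bij g" "\<And>x y. g (x + y) = g x + g y"
    "\<And>k x. g (scale2 k x) = scale k (g x)" "\<And>x y. g (m x y) = mult (g x) (g y)"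
    and J: "mideal m J"
  shows "J = {0} \<or> J = UNIV"
proof -
  have g0: "g 0 = 0" using g(2)[of 0 0] by simp
  have inj: "inj g" and sj: "surj g" using g(1) by (auto simp: bij_def)
  have gi: "g (inv g v) = v" for v using sj by (simp add: surj_f_inv_f)
  have "alg_ideal scale mult (g ` J)"
    unfolding alg_ideal_def
  proof (intro conjI allI impI ballI)
    show "module.subspace scale (g ` J)"
    proof (rule module.subspaceI)
      show "module scale" using VS by (simp add: module_iff_vector_space)
    next
    show "0 \<in> g ` J" using J g0 unfolding mideal_def by (metis image_eqI)
    next
    fix x y assume "x \<in> g ` J" "y \<in> g ` J"
    then obtain x' y' where "x' \<in> J" "y' \<in> J" "x = g x'" "y = g y'" by blast
    then show "x + y \<in> g ` J" using J g(2)[of x' y'] unfolding mideal_def by (metis image_eqI)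
  next
    fix k x assume "x \<in> g ` J"
    then show "scale k x \<in> g ` J" using J g(3) unfolding mideal_def by (metis image_iff)
  qed
  next
    fix z x assume x: "x \<in> g ` J"
    then obtain x' where x': "x' \<in> J" "x = g x'" by blast
    have "mult z x = g (m (inv g z) x')" using g(4) gi x' by metis
    moreover have "m (inv g z) x' \<in> J" using J x' unfolding mideal_def by blast
    ultimately show "mult z x \<in> g ` J" by simp
    have "mult x z = g (m x' (inv g z))" using g(4) gi x' by metis
    moreover have "m x' (inv g z) \<in> J" using J x' unfolding mideal_def by blast
    ultimately show "mult x z \<in> g ` J" by simp
  qed
  then have "g ` J = {0} \<or> g ` J = UNIV" using S unfolding is_simple_algebra_def by blast
  then show ?thesis
  proof
    assume "g ` J = {0}"
    then have "g ` J = g ` {0}" using g0 by simp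
    then have "J = {0}" using inj_image_eq_iff[OF inj, of J "{0}"] by blast
    then show ?thesis by blast
  next
    assume "g ` J = UNIV"
    then have "g ` J = g ` UNIV" using sj by simp
    then have "J = UNIV" using inj_image_eq_iff[OF inj, of J UNIV] by blast
    then show ?thesis by blast
  qed
qed

lemma simple_consts:
  assumes VS: "vector_space scale" and BL: "bilin scale mult"
    and nb: "nat_basis scale mult u w a b c d" and S: "is_simple_algebra scale mult"
  shows "b \<noteq> 0" "c \<noteq> 0" "a * d \<noteq> b * c"
proof -
  define g where "g = (\<lambda>x::'a\<times>'a. scale (fst x) u + scale (snd x) w)"
  note G = nat_basis_mult[OF VS BL nb g_def]
  have T: "J = {0} \<or> J = UNIV" if "mideal (evo_mult2 a b c d) J" for J
    by (rule simple_transfer[where m="evo_mult2 a b c d", OF VS S G(1) G(2) G(3) G(4) that])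
  show c: "c \<noteq> 0"
  proof
    assume c0: "c = 0"
    have "mideal (evo_mult2 a b c d) {x. snd x = 0}"
      unfolding mideal_def by (intro conjI ballI allI impI) (simp_all add: evo_mult2_def scale2_def c0)
    from T[OF this] have "{x::'a\<times>'a. snd x = 0} = {0} \<or> {x::'a\<times>'a. snd x = 0} = UNIV" .
    then show False
    proof
      assume h: "{x::'a\<times>'a. snd x = 0} = {0}"
      have "(1::'a, 0::'a) \<in> {x::'a\<times>'a. snd x = 0}" by (simp)
      then have "(1::'a, 0::'a) \<in> ({0}::('a\<times>'a) set)" by (simp only: h)
      then show False by (simp add: zero_prod_def)
    next
      assume h: "{x::'a\<times>'a. snd x = 0} = UNIV"
      have "(0::'a, 1::'a) \<in> (UNIV::('a\<times>'a) set)" by simp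
      then have "(0::'a, 1::'a) \<in> {x::'a\<times>'a. snd x = 0}" by (simp only: h)
      then show False by (simp add: zero_prod_def)
    qed
  qed
  show "b \<noteq> 0"
  proof
    assume b0: "b = 0"
    have "mideal (evo_mult2 a b c d) {x. fst x = 0}"
      unfolding mideal_def by (intro conjI ballI allI impI) (simp_all add: evo_mult2_def scale2_def b0)
    from T[OF this] have "{x::'a\<times>'a. fst x = 0} = {0} \<or> {x::'a\<times>'a. fst x = 0} = UNIV" .
    then show False
    proof
      assume h: "{x::'a\<times>'a. fst x = 0} = {0}"
      have "(0::'a, 1::'a) \<in> {x::'a\<times>'a. fst x = 0}" by (simp)
      then have "(0::'a, 1::'a) \<in> ({0}::('a\<times>'a) set)" by (simp only: h)
      then show False by (simp add: zero_prod_def)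
    next
      assume h: "{x::'a\<times>'a. fst x = 0} = UNIV"
      have "(1::'a, 0::'a) \<in> (UNIV::('a\<times>'a) set)" by simp
      then have "(1::'a, 0::'a) \<in> {x::'a\<times>'a. fst x = 0}" by (simp only: h)
      then show False by (simp add: zero_prod_def)
    qed
  qed
  show "a * d \<noteq> b * c"
  proof
    assume det: "a * d = b * c"
    have "mideal (evo_mult2 a b c d) {x. c * fst x = a * snd x}"
      unfolding mideal_def evo_mult2_def scale2_def
    proof (intro conjI allI impI ballI)
      fix z x :: "'a \<times> 'a" assume "x \<in> {x. c * fst x = a * snd x}"
      have key: "c * (P * a + Q * b) = a * (P * c + Q * d)" for P Q
      proof -
        have "c * (P * a + Q * b) - a * (P * c + Q * d) = Q * (b * c - a * d)"
          by (simp add: algebra_simps)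
        then show ?thesis using det by simp
      qed
      show "(fst z * fst x * a + snd z * snd x * b, fst z * fst x * c + snd z * snd x * d)
          \<in> {x. c * fst x = a * snd x}"
        using key by simp
      show "(fst x * fst z * a + snd x * snd z * b, fst x * fst z * c + snd x * snd z * d)
          \<in> {x. c * fst x = a * snd x}"
        using key by simp
    qed (simp_all add: algebra_simps)
    from T[OF this] have "{x::'a\<times>'a. c * fst x = a * snd x} = {0} \<or> {x::'a\<times>'a. c * fst x = a * snd x} = UNIV" .
    then show False
    proof
      assume h: "{x::'a\<times>'a. c * fst x = a * snd x} = {0}"
      have "(a, c) \<in> {x::'a\<times>'a. c * fst x = a * snd x}" by (simp add: mult.commute)
      then have "(a, c) \<in> ({0}::('a\<times>'a) set)" by (simp only: h)
      then show False using c by (simp add: zero_prod_def)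
    next
      assume h: "{x::'a\<times>'a. c * fst x = a * snd x} = UNIV"
      have "(1::'a, 0::'a) \<in> (UNIV::('a\<times>'a) set)" by simp
      then have "(1::'a, 0::'a) \<in> {x::'a\<times>'a. c * fst x = a * snd x}" by (simp only: h)
      then show False using c by (simp add: zero_prod_def)
    qed
  qed
qed

lemma nat_basis_cong:
  "nat_basis scale mult u w a b c d \<Longrightarrow> a = a' \<Longrightarrow> b = b' \<Longrightarrow> c = c' \<Longrightarrow> d = d'
    \<Longrightarrow> nat_basis scale mult u w a' b' c' d'"
  by simp

lemma alg_cases:
  fixes a b c d a' b' c' d' x1 x2 y1 y2 :: "'k::field"
  assumes "x1 * x2 = 0" "y1 * y2 = 0" "x1 \<noteq> 0 \<or> y1 \<noteq> 0" "x2 \<noteq> 0 \<or> y2 \<noteq> 0"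
    and e1: "a * x1 + c * x2 = x1 * x1 * a' + y1 * y1 * b'"
    and e2: "a * y1 + c * y2 = x1 * x1 * c' + y1 * y1 * d'"
    and e3: "b * x1 + d * x2 = x2 * x2 * a' + y2 * y2 * b'"
    and e4: "b * y1 + d * y2 = x2 * x2 * c' + y2 * y2 * d'"
  shows "((a = 0) = (a' = 0) \<and> (d = 0) = (d' = 0)) \<or> ((a = 0) = (d' = 0) \<and> (d = 0) = (a' = 0))"
proof (cases "x1 = 0")
  case True
  then have y1: "y1 \<noteq> 0" using assms(3) by simp
  then have y2: "y2 = 0" using assms(2) by simp
  then have x2: "x2 \<noteq> 0" using assms(4) by simp
  have "a * y1 = y1 * y1 * d'" using e2 True y2 by simp
  then have "y1 * (a - y1 * d') = 0" by (simp add: algebra_simps)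
  then have A: "a = y1 * d'" using y1 by simp
  have "d * x2 = x2 * x2 * a'" using e3 True y2 by simp
  then have "x2 * (d - x2 * a') = 0" by (simp add: algebra_simps)
  then have D: "d = x2 * a'" using x2 by simp
  show ?thesis using A D x2 y1 by simp
next
  case False
  then have x2: "x2 = 0" using assms(1) by simp
  then have y2: "y2 \<noteq> 0" using assms(4) by simp
  then have y1: "y1 = 0" using assms(2) by simp
  have "a * x1 = x1 * x1 * a'" using e1 x2 y1 by simp
  then have "x1 * (a - x1 * a') = 0" by (simp add: algebra_simps)
  then have A: "a = x1 * a'" using False by simp
  have "d * y2 = y2 * y2 * d'" using e4 x2 y1 by simp
  then have "y2 * (d - y2 * d') = 0" by (simp add: algebra_simps)
  then have D: "d = y2 * d'" using y2 by simp
  show ?thesis using A D False y2 by simp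
qed

lemma model_unique:
  fixes scale :: "'k::field \<Rightarrow> 'v::ab_group_add \<Rightarrow> 'v"
  assumes I1: "iso_to_model scale mult (evo_mult2 a b c d)"
    and I2: "iso_to_model scale mult (evo_mult2 a' b' c' d')"
    and det: "a' * d' \<noteq> b' * c'"
  shows "((a = 0) = (a' = 0) \<and> (d = 0) = (d' = 0)) \<or> ((a = 0) = (d' = 0) \<and> (d = 0) = (a' = 0))"
proof -
  obtain f where f: "bij f" "Vector_Spaces.linear scale scale2 f"
    "\<And>x y. f (mult x y) = evo_mult2 a b c d (f x) (f y)"
    using I1 unfolding iso_to_model_def by blast
  obtain g where g: "bij g" "Vector_Spaces.linear scale scale2 g"
    "\<And>x y. g (mult x y) = evo_mult2 a' b' c' d' (g x) (g y)"
    using I2 unfolding iso_to_model_def by blast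
  have fadd: "f (x + y) = f x + f y" and fsc: "f (scale k x) = scale2 k (f x)" for x y k
    using f(2) unfolding Vector_Spaces.linear_iff by auto
  have gadd: "g (x + y) = g x + g y" and gsc: "g (scale k x) = scale2 k (g x)" for x y k
    using g(2) unfolding Vector_Spaces.linear_iff by auto
  define F where "F = inv f"
  have fF: "f (F y) = y" for y unfolding F_def using f(1) by (simp add: bij_is_surj surj_f_inv_f)
  have Ff: "F (f x) = x" for x unfolding F_def using f(1) by (simp add: bij_is_inj)
  define h where "h = (\<lambda>x. g (F x))"
  have hadd: "h (x + y) = h x + h y" for x y
  proof -
    have "x + y = f (F x + F y)" by (simp only: fadd fF)
    then have "F (x + y) = F x + F y" using Ff by simp
    then show ?thesis unfolding h_def by (simp add: gadd)
  qed
  have hsc: "h (scale2 k x) = scale2 k (h x)" for k x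
  proof -
    have "scale2 k x = f (scale k (F x))" by (simp only: fsc fF)
    then have "F (scale2 k x) = scale k (F x)" using Ff by simp
    then show ?thesis unfolding h_def by (simp add: gsc)
  qed
  have hm: "h (evo_mult2 a b c d x y) = evo_mult2 a' b' c' d' (h x) (h y)" for x y
  proof -
    have "evo_mult2 a b c d x y = f (mult (F x) (F y))" by (simp only: f(3) fF)
    then have "F (evo_mult2 a b c d x y) = mult (F x) (F y)" using Ff by simp
    then show ?thesis unfolding h_def by (simp add: g(3))
  qed
  have injh: "inj h"
  proof (rule injI)
    fix x y assume "h x = h y"
    then have "g (F x) = g (F y)" unfolding h_def .
    then have "F x = F y" using g(1) by (simp add: bij_is_inj inj_eq)
    then have "f (F x) = f (F y)" by simp
    then show "x = y" by (simp add: fF)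
  qed
  have h0: "h 0 = 0" using hadd[of 0 0] by simp
  define x1 where "x1 = fst (h (1, 0))"
  define y1 where "y1 = snd (h (1, 0))"
  define x2 where "x2 = fst (h (0, 1))"
  define y2 where "y2 = snd (h (0, 1))"
  have hpq: "h (p, q) = (p * x1 + q * x2, p * y1 + q * y2)" for p q
  proof -
    have "(p, q) = scale2 p (1, 0) + scale2 q (0, 1)" by (simp add: scale2_def)
    then have "h (p, q) = scale2 p (h (1, 0)) + scale2 q (h (0, 1))" by (simp add: hadd hsc)
    then show ?thesis unfolding x1_def x2_def y1_def y2_def scale2_def by (simp add: mult.commute)
  qed
  have n1: "x1 \<noteq> 0 \<or> y1 \<noteq> 0"
  proof (rule ccontr)
    assume "\<not> (x1 \<noteq> 0 \<or> y1 \<noteq> 0)"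
    then have "h (1, 0) = h 0" using hpq[of 1 0] h0 by (simp add: zero_prod_def)
    then show False using injh by (metis inj_eq zero_prod_def zero_neq_one prod.inject)
  qed
  have n2: "x2 \<noteq> 0 \<or> y2 \<noteq> 0"
  proof (rule ccontr)
    assume "\<not> (x2 \<noteq> 0 \<or> y2 \<noteq> 0)"
    then have "h (0, 1) = h 0" using hpq[of 0 1] h0 by (simp add: zero_prod_def)
    then show False using injh by (metis inj_eq zero_prod_def zero_neq_one prod.inject)
  qed
  have "evo_mult2 a' b' c' d' (h (1, 0)) (h (0, 1)) = h (evo_mult2 a b c d (1, 0) (0, 1))"
    by (simp add: hm)
  also have "evo_mult2 a b c d (1, 0) (0, 1) = 0" by (simp add: evo_mult2_def zero_prod_def)
  finally have "evo_mult2 a' b' c' d' (h (1, 0)) (h (0, 1)) = 0" using h0 by simp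
  then have P: "x1 * x2 * a' + y1 * y2 * b' = 0" "x1 * x2 * c' + y1 * y2 * d' = 0"
    using hpq[of 1 0] hpq[of 0 1] by (simp_all add: evo_mult2_def zero_prod_def)
  have z1: "x1 * x2 = 0"
  proof -
    have "(a' * d' - b' * c') * (x1 * x2) = d' * (x1 * x2 * a' + y1 * y2 * b') - b' * (x1 * x2 * c' + y1 * y2 * d')"
      by (simp add: algebra_simps)
    then have "(a' * d' - b' * c') * (x1 * x2) = 0" using P by simp
    then show ?thesis using det by simp
  qed
  have z2: "y1 * y2 = 0"
  proof -
    have "(a' * d' - b' * c') * (y1 * y2) = a' * (x1 * x2 * c' + y1 * y2 * d') - c' * (x1 * x2 * a' + y1 * y2 * b')"
      by (simp add: algebra_simps)
    then have "(a' * d' - b' * c') * (y1 * y2) = 0" using P by simp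
    then show ?thesis using det by simp
  qed
  have "h (evo_mult2 a b c d (1, 0) (1, 0)) = evo_mult2 a' b' c' d' (h (1, 0)) (h (1, 0))" by (rule hm)
  then have E1: "a * x1 + c * x2 = x1 * x1 * a' + y1 * y1 * b'" "a * y1 + c * y2 = x1 * x1 * c' + y1 * y1 * d'"
    using hpq[of 1 0] hpq[of a c] by (simp_all add: evo_mult2_def)
  have "h (evo_mult2 a b c d (0, 1) (0, 1)) = evo_mult2 a' b' c' d' (h (0, 1)) (h (0, 1))" by (rule hm)
  then have E2: "b * x1 + d * x2 = x2 * x2 * a' + y2 * y2 * b'" "b * y1 + d * y2 = x2 * x2 * c' + y2 * y2 * d'"
    using hpq[of 0 1] hpq[of b d] by (simp_all add: evo_mult2_def)
  show ?thesis by (rule alg_cases[OF z1 z2 n1 n2 E1 E2])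
qed

lemma existence:
  fixes scale :: "'k::field \<Rightarrow> 'v::ab_group_add \<Rightarrow> 'v"
  assumes VS: "vector_space scale" and BL: "bilin scale mult"
    and nb: "nat_basis scale mult u w a b c d" and S: "is_simple_algebra scale mult"
  shows "type_II_0_2 scale mult \<or> type_II_1_3 scale mult \<or> type_II_2_4 scale mult"
proof -
  note C = simple_consts[OF VS BL nb S]
  show ?thesis
  proof (cases "a = 0")
    case a0: True
    show ?thesis
    proof (cases "d = 0")
      case d0: True
      have nb': "nat_basis scale mult (scale 1 u) (scale c w) 0 (c * c * b) 1 0"
        by (rule nat_basis_cong[OF nat_basis_rescale[OF VS BL nb, of 1 c]]) (use C a0 d0 in auto)
      have "type_II_0_2 scale mult"
        unfolding type_II_0_2_def using model_iso[OF VS BL nb'] C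
        by (intro exI[of _ "c * c * b"] conjI) auto
      then show ?thesis by blast
    next
      case d0: False
      note nbs = nat_basis_swap[OF nb]
      have nb': "nat_basis scale mult (scale (1/d) w) (scale (b/(d*d)) u) 1 ((b/(d*d)) * (b/(d*d)) * c * d) 1 0"
        by (rule nat_basis_cong[OF nat_basis_rescale[OF VS BL nbs, of "1/d" "b/(d*d)"]])
          (use C a0 d0 in \<open>auto simp: field_simps\<close>)
      have "type_II_1_3 scale mult"
        unfolding type_II_1_3_def using model_iso[OF VS BL nb'] simple_consts[OF VS BL nb' S] by auto
      then show ?thesis by blast
    qed
  next
    case a0: False
    show ?thesis
    proof (cases "d = 0")
      case d0: True
      have nb': "nat_basis scale mult (scale (1/a) u) (scale (c/(a*a)) w) 1 ((c/(a*a)) * (c/(a*a)) * b * a) 1 0"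
        by (rule nat_basis_cong[OF nat_basis_rescale[OF VS BL nb, of "1/a" "c/(a*a)"]])
          (use C a0 d0 in \<open>auto simp: field_simps\<close>)
      have "type_II_1_3 scale mult"
        unfolding type_II_1_3_def using model_iso[OF VS BL nb'] simple_consts[OF VS BL nb' S] by auto
      then show ?thesis by blast
    next
      case d0: False
      have nb': "nat_basis scale mult (scale (1/a) u) (scale (1/d) w) 1 (b * a / (d * d)) (c * d / (a * a)) 1"
        by (rule nat_basis_cong[OF nat_basis_rescale[OF VS BL nb, of "1/a" "1/d"]])
          (use C a0 d0 in \<open>auto simp: field_simps\<close>)
      note C' = simple_consts[OF VS BL nb' S]
      have "type_II_2_4 scale mult"
        unfolding type_II_2_4_def using model_iso[OF VS BL nb'] C'
        by (intro exI[of _ "b * a / (d * d)"] exI[of _ "c * d / (a * a)"]) auto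
      then show ?thesis by blast
    qed
  qed
qed

lemma get_basis:
  fixes scale :: "'k::field \<Rightarrow> 'v::ab_group_add \<Rightarrow> 'v"
  assumes E: "is_evolution_algebra scale mult"
    and D: "vector_space.dim scale (UNIV :: 'v set) = 2"
  shows "\<exists>u w a b c d. nat_basis scale mult u w a b c d"
proof -
  obtain B where alg: "is_algebra scale mult" and ind: "\<not> module.dependent scale B"
    and sp: "module.span scale B = UNIV" and orth: "\<forall>x\<in>B. \<forall>y\<in>B. x \<noteq> y \<longrightarrow> mult x y = 0"
    using E unfolding is_evolution_algebra_def by blast
  note VS = algebra_bilin(1)[OF alg]
  interpret vs: vector_space scale by (rule VS)
  have "vs.dim UNIV = card B" using vs.dim_eq_card[of B UNIV] sp ind by simp
  then have "card B = 2" using D by simp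
  then obtain u w where B: "B = {u, w}" and uw: "u \<noteq> w" by (auto simp: card_2_iff)
  have i: "p = 0 \<and> q = 0" if h: "scale p u + scale q w = 0" for p q
  proof (rule ccontr)
    assume nz: "\<not> (p = 0 \<and> q = 0)"
    define U where "U = (\<lambda>v. if v = u then p else q)"
    have "(\<Sum>v\<in>{u, w}. scale (U v) v) = scale p u + scale q w" using uw by (simp add: U_def)
    then have "vs.dependent {u, w}"
      using nz h uw by (subst vs.dependent_finite) (auto simp: U_def intro!: exI[of _ U])
    then show False using ind B by simp
  qed
  have s: "\<exists>p q. v = scale p u + scale q w" for v
  proof -
    have "v \<in> vs.span {u, w}" using sp B by simp
    then obtain U where "v = (\<Sum>v\<in>{u, w}. scale (U v) v)" by (auto simp: vs.span_finite)
    then have "v = scale (U u) u + scale (U w) w" using uw by simp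
    then show ?thesis by blast
  qed
  obtain a c where ac: "mult u u = scale a u + scale c w" using s by blast
  obtain b d where bd: "mult w w = scale b u + scale d w" using s by blast
  have "nat_basis scale mult u w a b c d"
    unfolding nat_basis_def
  proof (intro conjI allI impI)
    show "mult u w = 0" "mult w u = 0" using orth B uw by auto
  qed (use i s ac bd in auto)
  then show ?thesis by blast
qed

theorem theorem3p4:
  fixes scale :: "'k::field \<Rightarrow> 'v::ab_group_add \<Rightarrow> 'v"
    and mult :: "'v \<Rightarrow> 'v \<Rightarrow> 'v"
  assumes "is_evolution_algebra scale mult"
    and "vector_space.dim scale (UNIV :: 'v set) = 2"
    and "is_simple_algebra scale mult"
  shows "(type_II_0_2 scale mult \<or> type_II_1_3 scale mult \<or> type_II_2_4 scale mult) \<and>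
    \<not> (type_II_0_2 scale mult \<and> type_II_1_3 scale mult) \<and>
    \<not> (type_II_0_2 scale mult \<and> type_II_2_4 scale mult) \<and>
    \<not> (type_II_1_3 scale mult \<and> type_II_2_4 scale mult)"
proof (intro conjI notI)
  have alg: "is_algebra scale mult" using assms(1) unfolding is_evolution_algebra_def by blast
  note VS = algebra_bilin(1)[OF alg] and BL = algebra_bilin(2)[OF alg]
  obtain u w a b c d where nb: "nat_basis scale mult u w a b c d"
    using get_basis[OF assms(1,2)] by blast
  show "type_II_0_2 scale mult \<or> type_II_1_3 scale mult \<or> type_II_2_4 scale mult"
    by (rule existence[OF VS BL nb assms(3)])
next
  assume "type_II_0_2 scale mult \<and> type_II_1_3 scale mult"
  then obtain l1 l2 :: 'k where "l1 \<noteq> 0" "l2 \<noteq> 0" "iso_to_model scale mult (evo_mult2 0 l1 1 0)"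
    "iso_to_model scale mult (evo_mult2 1 l2 1 0)"
    unfolding type_II_0_2_def type_II_1_3_def by blast
  from model_unique[OF this(3,4)] this(2) show False by simp
next
  assume "type_II_0_2 scale mult \<and> type_II_2_4 scale mult"
  then obtain l1 l2 m2 :: 'k where "l1 \<noteq> 0" "l2 * m2 \<noteq> 1" "iso_to_model scale mult (evo_mult2 0 l1 1 0)"
    "iso_to_model scale mult (evo_mult2 1 l2 m2 1)"
    unfolding type_II_0_2_def type_II_2_4_def by blast
  from model_unique[OF this(3,4)] this(2) show False by simp
next
  assume "type_II_1_3 scale mult \<and> type_II_2_4 scale mult"
  then obtain l1 l2 m2 :: 'k where "l1 \<noteq> 0" "l2 * m2 \<noteq> 1" "iso_to_model scale mult (evo_mult2 1 l1 1 0)"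
    "iso_to_model scale mult (evo_mult2 1 l2 m2 1)"
    unfolding type_II_1_3_def type_II_2_4_def by blast
  from model_unique[OF this(3,4)] this(2) show False by simp
qed

end
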